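(* Let $a,b\in\mathbb{R}$ with $b\neq0$, $T>0$, $h\in(0,1)$, and let $m_\Lambda[n]=\exp\!\big(\jmath\,\frac{a}{2b}(nTh)^2\big)$ for $n\in\mathbb{Z}$. Let $u=(u[n])_{n\in\mathbb{Z}}$ be the state sequence of the first-order $\Lambda\Sigma\Delta$ scheme $$u[n]=g[n]-q_{\Lambda}[n]+e^{-\jmath\frac{a(2n-1)(Th)^2}{2b}}u[n-1],\qquad q_{\Lambda}[n]=\operatorname{csgn}\!\Big(e^{-\jmath\frac{a(2n-1)(Th)^2}{2b}}u[n-1]+g[n]\Big),$$ driven by samples $g[n]=g(nTh)$ of a signal $g$ bandlimited to $[-\Omega,\Omega]$ in the LCT domain with $|g|\le1$, where the states satisfy $|\operatorname{Re}(u[n])|<1$ and $|\operatorname{Im}(u[n])|<1$ for all $n\in\mathbb{Z}$. Let $\varphi:\mathbb{R}\to\mathbb{C}$ be continuously differentiable with $\varphi'\in L^1(\mathbb{R})$ and $\sum_{n\in\mathbb{Z}}|\varphi(x-nh)|<\infty$ for every $x\in\mathbb{R}$. Define $\tilde u[n]=m_\Lambda[n]u[n]$, $v[n]=\delta[n]-\delta[n-1]$, and $$e(t)=h\,e^{-\jmath\frac{a t^2}{2b}}\sum_{n\in\mathbb{Z}}(\tilde u* v)[n]\,\varphi\!\Big(\frac{t}{T}-nh\Big),\qquad t\in\mathbb{R}.$$ Then for all $t\in\mathbb{R}$, $$|e(t)|\le h\sqrt{2}\,\|\varphi'\|_{L^1}.$$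
   Context: $\jmath$ is the imaginary unit; $*$ denotes discrete convolution, so $(\tilde u*v)[n]=\tilde u[n]-\tilde u[n-1]$; $\delta$ is the Kronecker delta. $\operatorname{csgn}(z)=\operatorname{sgn}(\operatorname{Re}z)+\jmath\operatorname{sgn}(\operatorname{Im}z)$ with $\operatorname{sgn}$ taking values $\pm1$. $e(t)$ is the approximation error $g(t)-\tilde g(t)$ of the reconstruction $\tilde g(t)=h\,e^{-\jmath\frac{at^2}{2b}}\sum_n m_\Lambda[n]q_\Lambda[n]\varphi(\frac tT-nh)$ with low-pass kernel $\varphi$ of bandwidth $\Omega$, and $T=\pi b/\Omega$. The Linear Canonical Transform has parameter matrix $\Lambda=\begin{bmatrix}a&b\\c&d\end{bmatrix}$, $ad-bc=1$. *)

theory Defs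
  imports "HOL-Analysis.Analysis"
begin

definition sgnpm :: "real \<Rightarrow> real" where
  "sgnpm x = (if x \<ge> 0 then 1 else -1)"

definition csgn :: "complex \<Rightarrow> complex" where
  "csgn z = complex_of_real (sgnpm (Re z)) + \<i> * complex_of_real (sgnpm (Im z))"

definition chirp_mod :: "real \<Rightarrow> real \<Rightarrow> real \<Rightarrow> real \<Rightarrow> int \<Rightarrow> complex" where
  "chirp_mod a b T h n = exp (\<i> * complex_of_real (a / (2*b) * (real_of_int n * T * h)^2))"

definition lsd_phase :: "real \<Rightarrow> real \<Rightarrow> real \<Rightarrow> real \<Rightarrow> int \<Rightarrow> complex" where
  "lsd_phase a b T h n = exp (- \<i> * complex_of_real (a * (2 * real_of_int n - 1) * (T*h)^2 / (2*b)))"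

text \<open>Linear canonical transform kernel (up to the constant normalisation) for
  parameters (a,b,c,d), b \<noteq> 0.\<close>
definition lct_kernel :: "real \<Rightarrow> real \<Rightarrow> real \<Rightarrow> real \<Rightarrow> real \<Rightarrow> complex" where
  "lct_kernel a b d t \<omega> =
     exp (\<i> * complex_of_real (a * t^2 / (2*b) - \<omega> * t / b + d * \<omega>^2 / (2*b)))"

definition lct_bandlimited :: "real \<Rightarrow> real \<Rightarrow> real \<Rightarrow> real \<Rightarrow> real \<Rightarrow> (real \<Rightarrow> complex) \<Rightarrow> bool" where
  "lct_bandlimited a b c d \<Omega> g \<longleftrightarrow>
     (\<exists>G :: real \<Rightarrow> complex. set_integrable lborel {-\<Omega>..\<Omega>} G \<and>
        (\<forall>t. g t = (LINT \<omega>:{-\<Omega>..\<Omega>}|lborel. G \<omega> * cnj (lct_kernel a b d t \<omega>))))"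

definition lsd_scheme :: "real \<Rightarrow> real \<Rightarrow> real \<Rightarrow> real \<Rightarrow> (real \<Rightarrow> complex)
    \<Rightarrow> (int \<Rightarrow> complex) \<Rightarrow> (int \<Rightarrow> complex) \<Rightarrow> bool" where
  "lsd_scheme a b T h g u q \<longleftrightarrow>
     (\<forall>n::int.
        q n = csgn (lsd_phase a b T h n * u (n-1) + g (real_of_int n * T * h)) \<and>
        u n = g (real_of_int n * T * h) - q n + lsd_phase a b T h n * u (n-1))"

text \<open>Error e(t) = h e^{-i a t^2/(2b)} sum_n (u~ * v)[n] phi(t/T - n h),
  with u~ = m_Lambda u and (u~ * v)[n] = u~[n] - u~[n-1].\<close>
definition lsd_error :: "real \<Rightarrow> real \<Rightarrow> real \<Rightarrow> real \<Rightarrow> (int \<Rightarrow> complex)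
    \<Rightarrow> (real \<Rightarrow> complex) \<Rightarrow> real \<Rightarrow> complex" where
  "lsd_error a b T h u \<phi> t =
     complex_of_real h * exp (- \<i> * complex_of_real (a * t^2 / (2*b))) *
     (\<Sum>\<^sub>\<infinity>n::int. (chirp_mod a b T h n * u n - chirp_mod a b T h (n-1) * u (n-1))
                     * \<phi> (t / T - real_of_int n * h))"

end

theory Submission
  imports Defs
begin


lemma ind_sum_le1:
  fixes x h y :: real and F :: "int set"
  assumes "h > 0" "finite F"
  shows "(\<Sum>n\<in>F. indicator {x - real_of_int n * h - h <..< x - real_of_int n * h} y) \<le> (1::real)"
proof -
  let ?I = "\<lambda>n::int. {x - real_of_int n * h - h <..< x - real_of_int n * h}"
  let ?k = "\<lfloor>(x - y) / h\<rfloor>"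
  have z: "indicator (?I n) y = (0::real)" if "n \<noteq> ?k" for n
  proof (rule ccontr)
    assume "indicator (?I n) y \<noteq> (0::real)"
    then have "y \<in> ?I n" by (auto simp: indicator_def split: if_splits)
    then have "real_of_int n * h < x - y" "x - y < (real_of_int n + 1) * h" by (auto simp: algebra_simps)
    then have "real_of_int n < (x - y)/h" "(x-y)/h < real_of_int n + 1" using assms(1)
      by (auto simp: field_simps)
    then have "?k = n" by linarith
    with that show False by simp
  qed
  have "(\<Sum>n\<in>F. indicator (?I n) y) = (\<Sum>n\<in>F \<inter> {?k}. indicator (?I n) y :: real)"
    by (rule sum.mono_neutral_right) (use assms z in auto)
  also have "\<dots> \<le> 1"
  proof -
    have c: "card ({?k} \<inter> S) \<le> Suc 0" for S :: "int set"
      using card_mono[of "{?k}" "{?k} \<inter> S"] by auto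
    show ?thesis by (cases "?k \<in> F") (simp_all add: Int_insert_right indicator_def c)
  qed
  finally show ?thesis .
qed

lemma sum_int_le:
  fixes x h :: real and F :: "int set" and p :: "real \<Rightarrow> complex"
  assumes "h > 0" "finite F" "integrable lborel p"
  shows "(\<Sum>n\<in>F. (LINT y:{x - real_of_int n * h - h <..< x - real_of_int n * h}|lborel. norm (p y)))
     \<le> (\<integral>y. norm (p y) \<partial>lborel)"
proof -
  let ?I = "\<lambda>n::int. {x - real_of_int n * h - h <..< x - real_of_int n * h}"
  have ip: "integrable lborel (\<lambda>y. norm (p y))" using assms(3) by auto
  have ii: "\<And>n. integrable lborel (\<lambda>y. indicator (?I n) y *\<^sub>R norm (p y))"
    by (rule integrable_mult_indicator[OF _ ip]) simp
  have "(\<Sum>n\<in>F. (LINT y:?I n|lborel. norm (p y)))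
     = (\<integral>y. (\<Sum>n\<in>F. indicator (?I n) y *\<^sub>R norm (p y)) \<partial>lborel)"
    unfolding set_lebesgue_integral_def
    by (subst Bochner_Integration.integral_sum[where I=F and M=lborel and f="\<lambda>n y. indicator (?I n) y *\<^sub>R norm (p y)"]) (use ii in simp_all)
  also have "\<dots> \<le> (\<integral>y. norm (p y) \<partial>lborel)"
  proof (rule integral_mono)
    show "integrable lborel (\<lambda>y. \<Sum>n\<in>F. indicator (?I n) y *\<^sub>R norm (p y))"
      by (rule Bochner_Integration.integrable_sum) (rule ii)
    show "integrable lborel (\<lambda>y. norm (p y))" by (rule ip)
    fix y
    have "(\<Sum>n\<in>F. indicator (?I n) y *\<^sub>R norm (p y)) = (\<Sum>n\<in>F. indicator (?I n) y) * norm (p y)"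
      by (simp add: sum_distrib_right)
    also have "\<dots> \<le> 1 * norm (p y)"
      by (rule mult_right_mono) (use ind_sum_le1[OF assms(1,2)] in auto)
    finally show "(\<Sum>n\<in>F. indicator (?I n) y *\<^sub>R norm (p y)) \<le> norm (p y)" by simp
  qed
  finally show ?thesis .
qed

lemma ftc_bound:
  fixes p p' :: "real \<Rightarrow> complex" and c d :: real
  assumes "c \<le> d" "\<forall>x. (p has_vector_derivative p' x) (at x)"
    and "continuous_on UNIV p'" "integrable lborel p'"
  shows "norm (p d - p c) \<le> (LINT y:{c<..<d}|lborel. norm (p' y))"
proof -
  have "(LBINT y=ereal c..ereal d. p' y) = p d - p c"
    by (rule interval_integral_FTC_finite)
      (use assms in \<open>auto intro: continuous_on_subset has_vector_derivative_at_within\<close>)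
  moreover have "(LBINT y=ereal c..ereal d. p' y) = (LINT y:{c<..<d}|lborel. p' y)"
    using interval_integral_Ioo[of "ereal c" "ereal d" p'] assms(1) by simp
  moreover have "set_integrable lborel {c<..<d} p'"
    unfolding set_integrable_def by (rule integrable_mult_indicator[OF _ assms(4)]) simp
  ultimately show ?thesis using set_integral_norm_bound by metis
qed


theorem mainTheorem2:
  fixes a b c d T h \<Omega> :: real
    and g :: "real \<Rightarrow> complex"
    and u q :: "int \<Rightarrow> complex"
    and \<phi> \<phi>' :: "real \<Rightarrow> complex"
  assumes "b \<noteq> 0" and "a * d - b * c = 1"
    and "T > 0" and "0 < h" and "h < 1" and "\<Omega> > 0"
    and "lct_bandlimited a b c d \<Omega> g"
    and "\<forall>t. norm (g t) \<le> 1"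
    and "lsd_scheme a b T h g u q"
    and "\<forall>n. \<bar>Re (u n)\<bar> < 1 \<and> \<bar>Im (u n)\<bar> < 1"
    and "\<forall>x. (\<phi> has_vector_derivative \<phi>' x) (at x)"
    and "continuous_on UNIV \<phi>'"
    and "integrable lborel \<phi>'"
    and "\<forall>x. (\<lambda>n::int. norm (\<phi> (x - real_of_int n * h))) summable_on UNIV"
  shows "\<forall>t. norm (lsd_error a b T h u \<phi> t) \<le> h * sqrt 2 * (\<integral>x. norm (\<phi>' x) \<partial>lborel)"
proof
  fix t :: real
  define x where "x = t / T"
  define f where "f n = \<phi> (x - real_of_int n * h)" for n :: int
  define w where "w n = chirp_mod a b T h n * u n" for n :: int
  define K where "K = (\<integral>x. norm (\<phi>' x) \<partial>lborel)"
  have hpos: "h > 0" using assms by simp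
  have nw: "norm (w n) \<le> sqrt 2" for n
  proof -
    have "norm (chirp_mod a b T h n) = 1"
      unfolding chirp_mod_def by (rule norm_exp_i_times)
    moreover have "norm (u n) \<le> sqrt 2"
    proof -
      have "(Re (u n))^2 < 1" "(Im (u n))^2 < 1"
        using assms(10) by (auto simp: abs_square_less_1)
      then show ?thesis unfolding cmod_def by (intro real_sqrt_le_mono) simp
    qed
    ultimately show ?thesis by (simp add: w_def norm_mult)
  qed
  have sf: "(\<lambda>n. norm (f n)) summable_on UNIV"
    using assms(14) unfolding f_def by blast
  have sf1: "(\<lambda>n. norm (f (n+1))) summable_on UNIV"
  proof -
    have "(\<lambda>n::int. norm (\<phi> (x - h - real_of_int n * h))) summable_on UNIV"
      using assms(14) by blast
    moreover have "\<phi> (x - h - real_of_int n * h) = f (n+1)" for n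
      unfolding f_def by (simp add: algebra_simps)
    ultimately show ?thesis by simp
  qed
  have s2f: "(\<lambda>n. sqrt 2 * norm (f n)) summable_on UNIV"
    by (rule summable_on_cmult_right[OF sf])
  have s2f1: "(\<lambda>n. sqrt 2 * norm (f (n+1))) summable_on UNIV"
    by (rule summable_on_cmult_right[OF sf1])
  have sA: "(\<lambda>n. w n * f n) summable_on UNIV"
    by (rule abs_summable_summable, rule Infinite_Sum.abs_summable_on_comparison_test'[OF s2f])
       (simp add: norm_mult mult_right_mono nw)
  have sB: "(\<lambda>n. w (n-1) * f n) summable_on UNIV"
    by (rule abs_summable_summable, rule Infinite_Sum.abs_summable_on_comparison_test'[OF s2f])
       (simp add: norm_mult mult_right_mono nw)
  have sB': "(\<lambda>n. w n * f (n+1)) summable_on UNIV"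
    by (rule abs_summable_summable, rule Infinite_Sum.abs_summable_on_comparison_test'[OF s2f1])
       (simp add: norm_mult mult_right_mono nw)
  have sdf: "(\<lambda>n. norm (f n - f (n+1))) summable_on UNIV"
    using summable_on_add[OF sf sf1]
    by (rule Infinite_Sum.abs_summable_on_comparison_test') (simp add: norm_triangle_ineq4)
  have s2df: "(\<lambda>n. sqrt 2 * norm (f n - f (n+1))) summable_on UNIV"
    by (rule summable_on_cmult_right[OF sdf])
  have snD: "(\<lambda>n. norm (w n * (f n - f (n+1)))) summable_on UNIV"
    by (rule Infinite_Sum.abs_summable_on_comparison_test'[OF s2df])
       (simp add: norm_mult mult_right_mono nw)
  have bij: "bij_betw (\<lambda>n::int. n + 1) UNIV UNIV"
    by (rule bij_betwI[where g="\<lambda>n. n - 1"]) auto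
  have eqB: "(\<Sum>\<^sub>\<infinity>n. w (n-1) * f n) = (\<Sum>\<^sub>\<infinity>n. w n * f (n+1))"
    using infsum_reindex_bij_betw[OF bij, of "\<lambda>n. w (n-1) * f n"] by simp
  have "(\<Sum>\<^sub>\<infinity>n. (w n - w (n-1)) * f n) = (\<Sum>\<^sub>\<infinity>n. w n * f n + - (w (n-1) * f n))"
    by (simp add: algebra_simps)
  also have "\<dots> = (\<Sum>\<^sub>\<infinity>n. w n * f n) - (\<Sum>\<^sub>\<infinity>n. w (n-1) * f n)"
    using infsum_add[OF sA summable_on_uminus[THEN iffD2, OF sB]] infsum_uminus by (simp add: infsum_uminus)
  also have "\<dots> = (\<Sum>\<^sub>\<infinity>n. w n * f n) - (\<Sum>\<^sub>\<infinity>n. w n * f (n+1))"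
    using eqB by simp
  also have "\<dots> = (\<Sum>\<^sub>\<infinity>n. w n * f n + - (w n * f (n+1)))"
    using infsum_add[OF sA summable_on_uminus[THEN iffD2, OF sB']] by (simp add: infsum_uminus)
  also have "\<dots> = (\<Sum>\<^sub>\<infinity>n. w n * (f n - f (n+1)))"
    by (simp add: algebra_simps)
  finally have eqS: "(\<Sum>\<^sub>\<infinity>n. (w n - w (n-1)) * f n) = (\<Sum>\<^sub>\<infinity>n. w n * (f n - f (n+1)))" .
  have nS: "norm (\<Sum>\<^sub>\<infinity>n. (w n - w (n-1)) * f n) \<le> sqrt 2 * K"
  proof -
    have "norm (\<Sum>\<^sub>\<infinity>n. w n * (f n - f (n+1))) \<le> (\<Sum>\<^sub>\<infinity>n. norm (w n * (f n - f (n+1))))"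
      by (rule norm_infsum_bound) (rule snD)
    also have "\<dots> \<le> (\<Sum>\<^sub>\<infinity>n. sqrt 2 * norm (f n - f (n+1)))"
      by (rule infsum_mono[OF snD s2df]) (simp add: norm_mult mult_right_mono nw)
    also have "\<dots> = sqrt 2 * (\<Sum>\<^sub>\<infinity>n. norm (f n - f (n+1)))"
      by (rule infsum_cmult_right) (rule sdf)
    also have "\<dots> \<le> sqrt 2 * K"
    proof (rule mult_left_mono)
      show "(\<Sum>\<^sub>\<infinity>n. norm (f n - f (n+1))) \<le> K"
      proof (rule infsum_le_finite_sums[OF sdf])
        fix F :: "int set" assume F: "finite F"
        have "(\<Sum>n\<in>F. norm (f n - f (n+1))) \<le>
          (\<Sum>n\<in>F. (LINT y:{x - real_of_int n * h - h <..< x - real_of_int n * h}|lborel. norm (\<phi>' y)))"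
        proof (rule sum_mono)
          fix n assume "n \<in> F"
          have "f (n+1) = \<phi> (x - real_of_int n * h - h)" unfolding f_def by (simp add: algebra_simps)
          then show "norm (f n - f (n+1)) \<le>
            (LINT y:{x - real_of_int n * h - h <..< x - real_of_int n * h}|lborel. norm (\<phi>' y))"
            unfolding f_def using ftc_bound[OF _ assms(11,12,13), of "x - real_of_int n * h - h" "x - real_of_int n * h"] hpos
            by simp
        qed
        also have "\<dots> \<le> K" unfolding K_def by (rule sum_int_le[OF hpos F assms(13)])
        finally show "(\<Sum>n\<in>F. norm (f n - f (n+1))) \<le> K" .
      qed
    qed simp
    finally show ?thesis using eqS by simp
  qed
  have "lsd_error a b T h u \<phi> t = complex_of_real h * exp (- \<i> * complex_of_real (a * t^2 / (2*b))) *
     (\<Sum>\<^sub>\<infinity>n. (w n - w (n-1)) * f n)"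
    unfolding lsd_error_def w_def f_def x_def by simp
  moreover have "norm (exp (- \<i> * complex_of_real (a * t^2 / (2*b)))) = 1"
    using norm_exp_i_times[of "- (a * t^2 / (2*b))"] by simp
  ultimately have "norm (lsd_error a b T h u \<phi> t) = h * norm (\<Sum>\<^sub>\<infinity>n. (w n - w (n-1)) * f n)"
    using hpos by (simp add: norm_mult)
  also have "\<dots> \<le> h * (sqrt 2 * K)"
    using nS hpos by (simp add: mult_left_mono)
  finally show "norm (lsd_error a b T h u \<phi> t) \<le> h * sqrt 2 * (\<integral>x. norm (\<phi>' x) \<partial>lborel)"
    unfolding K_def by (simp add: mult.assoc)
qed

end
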